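(* Let $A$ be a semiprime associative algebra and $Q$ a subalgebra of $Q^l_{\max}(A)$ containing $A$. Then (identifying $A^{(-)}/Z(A)$ with its image in $Q^{(-)}/Z(Q)$, using $Z(A)=Z(Q)\cap A$) the extensions of Lie algebras $A^{(-)}/Z(A)\subseteq Q^{(-)}/Z(Q)$ and $[A^{(-)},A^{(-)}]/Z([A^{(-)},A^{(-)}])\subseteq [Q^{(-)},Q^{(-)}]/Z([Q^{(-)},Q^{(-)}])$ are dense.
   Context: Algebras over a commutative unital ring $\Phi$. $Q^l_{\max}(A)$ is the maximal left quotient algebra of $A$. $A^{(-)}$ is the Lie algebra on $A$ with $[x,y]=xy-yx$; $[A^{(-)},A^{(-)}]$ is the span of all $[x,y]$; $Z(\cdot)$ denotes the center. For a Lie algebra $L$, $M(L)$ is the subalgebra of $\mathrm{End}_\Phi(L)$ generated by the identity and all $\mathrm{ad}_x$, $\mathrm{ad}_x(y)=[x,y]$. An extension $L\subseteq Q$ is dense if the only $\mu\in M(Q)$ with $\mu(L)=0$ is $\mu=0$. *)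

theory Defs
  imports Main "HOL.Modules"
begin

text \<open>Associative (not necessarily unital) algebras over a commutative unital ring
  of scalars 'k are modelled as subsets of an ambient Phi-algebra 'a, where the
  ambient ring structure is the type class ring and the scalar action is sc.\<close>

definition phi_algebra :: "('k::comm_ring_1 \<Rightarrow> 'a::ring \<Rightarrow> 'a) \<Rightarrow> bool" where
  "phi_algebra sc \<longleftrightarrow> module sc \<and>
     (\<forall>c x y. sc c (x * y) = sc c x * y \<and> sc c (x * y) = x * sc c y)"

definition submod :: "('k::comm_ring_1 \<Rightarrow> 'a::ring \<Rightarrow> 'a) \<Rightarrow> 'a set \<Rightarrow> bool" where
  "submod sc S \<longleftrightarrow> 0 \<in> S \<and> (\<forall>x\<in>S. \<forall>y\<in>S. x + y \<in> S) \<and> (\<forall>x\<in>S. - x \<in> S)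
     \<and> (\<forall>c. \<forall>x\<in>S. sc c x \<in> S)"

definition subalgebra :: "('k::comm_ring_1 \<Rightarrow> 'a::ring \<Rightarrow> 'a) \<Rightarrow> 'a set \<Rightarrow> bool" where
  "subalgebra sc S \<longleftrightarrow> submod sc S \<and> (\<forall>x\<in>S. \<forall>y\<in>S. x * y \<in> S)"

definition alg_ideal :: "('k::comm_ring_1 \<Rightarrow> 'a::ring \<Rightarrow> 'a) \<Rightarrow> 'a set \<Rightarrow> 'a set \<Rightarrow> bool" where
  "alg_ideal sc A I \<longleftrightarrow> I \<subseteq> A \<and> submod sc I \<and> (\<forall>a\<in>A. \<forall>x\<in>I. a * x \<in> I \<and> x * a \<in> I)"

definition left_ideal :: "('k::comm_ring_1 \<Rightarrow> 'a::ring \<Rightarrow> 'a) \<Rightarrow> 'a set \<Rightarrow> 'a set \<Rightarrow> bool" where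
  "left_ideal sc A I \<longleftrightarrow> I \<subseteq> A \<and> submod sc I \<and> (\<forall>a\<in>A. \<forall>x\<in>I. a * x \<in> I)"

definition semiprime :: "('k::comm_ring_1 \<Rightarrow> 'a::ring \<Rightarrow> 'a) \<Rightarrow> 'a set \<Rightarrow> bool" where
  "semiprime sc A \<longleftrightarrow>
     (\<forall>I. alg_ideal sc A I \<and> (\<forall>x\<in>I. \<forall>y\<in>I. x * y = 0) \<longrightarrow> I = {0})"

definition dense_left_ideal :: "('k::comm_ring_1 \<Rightarrow> 'a::ring \<Rightarrow> 'a) \<Rightarrow> 'a set \<Rightarrow> 'a set \<Rightarrow> bool" where
  "dense_left_ideal sc A I \<longleftrightarrow> left_ideal sc A I \<and>
     (\<forall>p\<in>A. \<forall>q\<in>A. p \<noteq> 0 \<longrightarrow> (\<exists>a\<in>A. a * p \<noteq> 0 \<and> a * q \<in> I))"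

text \<open>Qm is (a copy of) the maximal left quotient algebra of the semiprime algebra A,
  via Utumi's characterization.\<close>
definition is_Qlmax :: "('k::comm_ring_1 \<Rightarrow> 'a::ring \<Rightarrow> 'a) \<Rightarrow> 'a set \<Rightarrow> 'a set \<Rightarrow> bool" where
  "is_Qlmax sc A Qm \<longleftrightarrow> subalgebra sc Qm \<and> A \<subseteq> Qm \<and>
     (\<forall>q\<in>Qm. \<exists>I. dense_left_ideal sc A I \<and> (\<forall>x\<in>I. x * q \<in> A)) \<and>
     (\<forall>q\<in>Qm. \<forall>I. dense_left_ideal sc A I \<and> (\<forall>x\<in>I. x * q = 0) \<longrightarrow> q = 0) \<and>
     (\<forall>I f. dense_left_ideal sc A I \<and> (\<forall>x\<in>I. f x \<in> A)
        \<and> (\<forall>x\<in>I. \<forall>y\<in>I. f (x + y) = f x + f y)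
        \<and> (\<forall>c. \<forall>x\<in>I. f (sc c x) = sc c (f x))
        \<and> (\<forall>a\<in>A. \<forall>x\<in>I. f (a * x) = a * f x)
        \<longrightarrow> (\<exists>q\<in>Qm. \<forall>x\<in>I. f x = x * q))"

definition lie_br :: "'a::ring \<Rightarrow> 'a \<Rightarrow> 'a" where
  "lie_br x y = x * y - y * x"

text \<open>Center of a subset w.r.t. the commutator bracket (for an associative algebra this is
  its associative center Z(A), for a Lie subalgebra L of Q^(-) it is Z(L)).\<close>
definition lie_center :: "'a::ring set \<Rightarrow> 'a set" where
  "lie_center L = {z \<in> L. \<forall>x\<in>L. lie_br z x = 0}"

definition comm_span :: "('k::comm_ring_1 \<Rightarrow> 'a::ring \<Rightarrow> 'a) \<Rightarrow> 'a set \<Rightarrow> 'a set" where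
  "comm_span sc S = module.span sc {lie_br x y | x y. x \<in> S \<and> y \<in> S}"

inductive_set mult_alg :: "('k::comm_ring_1 \<Rightarrow> 'a::ring \<Rightarrow> 'a) \<Rightarrow> 'a set \<Rightarrow> ('a \<Rightarrow> 'a) set"
  for sc :: "'k::comm_ring_1 \<Rightarrow> 'a::ring \<Rightarrow> 'a" and L :: "'a set" where
  mult_id: "id \<in> mult_alg sc L"
| mult_ad: "x \<in> L \<Longrightarrow> lie_br x \<in> mult_alg sc L"
| mult_comp: "f \<in> mult_alg sc L \<Longrightarrow> g \<in> mult_alg sc L \<Longrightarrow> f \<circ> g \<in> mult_alg sc L"
| mult_add: "f \<in> mult_alg sc L \<Longrightarrow> g \<in> mult_alg sc L \<Longrightarrow> (\<lambda>y. f y + g y) \<in> mult_alg sc L"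
| mult_scale: "f \<in> mult_alg sc L \<Longrightarrow> (\<lambda>y. sc c (f y)) \<in> mult_alg sc L"

text \<open>Density of the Lie extension L1/Z(L1) \<subseteq> L2/Z(L2) (L1 \<subseteq> L2, L1/Z(L1) identified with
  its image (L1 + Z(L2))/Z(L2)).  Every element of M(L2/Z(L2)) is induced by some mu in M(L2)
  (ad of a coset is induced by ad of a representative), and the induced operator vanishes on
  a set of cosets iff mu maps the representatives into Z(L2).\<close>
definition dense_mod_center :: "('k::comm_ring_1 \<Rightarrow> 'a::ring \<Rightarrow> 'a) \<Rightarrow> 'a set \<Rightarrow> 'a set \<Rightarrow> bool" where
  "dense_mod_center sc L1 L2 \<longleftrightarrow>
     (\<forall>\<mu>\<in>mult_alg sc L2. (\<forall>y\<in>L1. \<mu> y \<in> lie_center L2) \<longrightarrow> (\<forall>y\<in>L2. \<mu> y \<in> lie_center L2))"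

end

theory Submission
  imports Defs
begin


inductive_set gid :: "('k::comm_ring_1 \<Rightarrow> 'a::ring \<Rightarrow> 'a) \<Rightarrow> 'a set \<Rightarrow> 'a set \<Rightarrow> 'a set"
  for sc :: "'k::comm_ring_1 \<Rightarrow> 'a::ring \<Rightarrow> 'a" and A :: "'a set" and S :: "'a set" where
  gb: "s \<in> S \<Longrightarrow> s \<in> gid sc A S"
| gz: "0 \<in> gid sc A S"
| ga: "u \<in> gid sc A S \<Longrightarrow> v \<in> gid sc A S \<Longrightarrow> u + v \<in> gid sc A S"
| gn: "u \<in> gid sc A S \<Longrightarrow> - u \<in> gid sc A S"
| gs: "u \<in> gid sc A S \<Longrightarrow> sc c u \<in> gid sc A S"
| gl: "a \<in> A \<Longrightarrow> u \<in> gid sc A S \<Longrightarrow> a * u \<in> gid sc A S"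
| gr: "a \<in> A \<Longrightarrow> u \<in> gid sc A S \<Longrightarrow> u * a \<in> gid sc A S"

locale QS =
  fixes sc :: "'k::comm_ring_1 \<Rightarrow> 'a::ring \<Rightarrow> 'a" and A Qm :: "'a set"
  assumes phi: "phi_algebra sc" and subA: "subalgebra sc A"
    and sp: "semiprime sc A" and qm: "is_Qlmax sc A Qm"
begin

lemma module_sc: "module sc" using phi by (simp add: phi_algebra_def)

sublocale module sc by (rule module_sc)

lemma scl: "sc c (x * y) = sc c x * y" using phi unfolding phi_algebra_def by blast
lemma scr: "sc c (x * y) = x * sc c y" using phi unfolding phi_algebra_def by blast

lemma subalg_facts:
  assumes "subalgebra sc S"
  shows "0 \<in> S" "x \<in> S \<Longrightarrow> y \<in> S \<Longrightarrow> x + y \<in> S" "x \<in> S \<Longrightarrow> - x \<in> S"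
    "x \<in> S \<Longrightarrow> y \<in> S \<Longrightarrow> x - y \<in> S" "x \<in> S \<Longrightarrow> sc c x \<in> S"
    "x \<in> S \<Longrightarrow> y \<in> S \<Longrightarrow> x * y \<in> S"
proof -
  show "0 \<in> S" using assms unfolding subalgebra_def submod_def by blast
  show "x \<in> S \<Longrightarrow> y \<in> S \<Longrightarrow> x + y \<in> S" using assms unfolding subalgebra_def submod_def by blast
  show "x \<in> S \<Longrightarrow> - x \<in> S" using assms unfolding subalgebra_def submod_def by blast
  show "x \<in> S \<Longrightarrow> y \<in> S \<Longrightarrow> x - y \<in> S" using assms unfolding subalgebra_def submod_def
    by (metis diff_conv_add_uminus)
  show "x \<in> S \<Longrightarrow> sc c x \<in> S" using assms unfolding subalgebra_def submod_def by blast
  show "x \<in> S \<Longrightarrow> y \<in> S \<Longrightarrow> x * y \<in> S" using assms unfolding subalgebra_def submod_def by blast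
qed

lemmas A_facts = subalg_facts[OF subA]

lemma subQm: "subalgebra sc Qm" and AQm: "A \<subseteq> Qm"
  using qm by (auto simp: is_Qlmax_def)

lemmas Q_facts = subalg_facts[OF subQm]

lemma U1: "q \<in> Qm \<Longrightarrow> \<exists>D. dense_left_ideal sc A D \<and> (\<forall>x\<in>D. x * q \<in> A)"
  using qm by (auto simp: is_Qlmax_def)

lemma U2: "q \<in> Qm \<Longrightarrow> dense_left_ideal sc A D \<Longrightarrow> (\<forall>x\<in>D. x * q = 0) \<Longrightarrow> q = 0"
  using qm by (auto simp: is_Qlmax_def)

lemma dense_sub: "dense_left_ideal sc A D \<Longrightarrow> x \<in> D \<Longrightarrow> x \<in> A"
  by (auto simp: dense_left_ideal_def left_ideal_def)

lemma dense_left: "dense_left_ideal sc A D \<Longrightarrow> a \<in> A \<Longrightarrow> x \<in> D \<Longrightarrow> a * x \<in> D"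
  by (auto simp: dense_left_ideal_def left_ideal_def)

lemma dense_dens: "dense_left_ideal sc A D \<Longrightarrow> p \<in> A \<Longrightarrow> r \<in> A \<Longrightarrow> p \<noteq> 0 \<Longrightarrow>
   \<exists>a\<in>A. a * p \<noteq> 0 \<and> a * r \<in> D"
  by (auto simp: dense_left_ideal_def)

lemma gid_sub: assumes "S \<subseteq> A" shows "u \<in> gid sc A S \<Longrightarrow> u \<in> A"
  by (induction rule: gid.induct) (use assms in \<open>auto intro: A_facts\<close>)

lemma gid_ideal: "S \<subseteq> A \<Longrightarrow> alg_ideal sc A (gid sc A S)"
  unfolding alg_ideal_def submod_def
  using gid_sub by (auto intro: gid.intros)

lemma gid_sq1:
  assumes SA: "S \<subseteq> A" and c: "\<forall>s\<in>S. \<forall>t\<in>S. s * t = 0 \<and> (\<forall>c\<in>A. s * c * t = 0)"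
  shows "u \<in> gid sc A S \<Longrightarrow> \<forall>t\<in>S. u * t = 0 \<and> (\<forall>c\<in>A. u * c * t = 0)"
proof (induction rule: gid.induct)
  case (gb s) then show ?case using c by auto
next
  case gz then show ?case by simp
next
  case (ga u v) then show ?case by (simp add: distrib_right)
next
  case (gn u) then show ?case by simp
next
  case (gs u c') then show ?case by (simp add: scl[symmetric])
next
  case (gl a u) then show ?case by (simp add: mult.assoc)
next
  case (gr a u)
  show ?case
  proof (intro ballI)
    fix t assume t: "t \<in> S"
    have 1: "u * a * t = 0" using gr t by blast
    have "\<forall>c\<in>A. u * a * c * t = 0"
    proof
      fix c assume "c \<in> A"
      then have "a * c \<in> A" using gr A_facts(6) by blast
      then have "u * (a * c) * t = 0" using gr t by blast
      then show "u * a * c * t = 0" by (simp add: mult.assoc)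
    qed
    then show "u * a * t = 0 \<and> (\<forall>c\<in>A. u * a * c * t = 0)" using 1 by blast
  qed
qed

lemma gid_sq:
  assumes SA: "S \<subseteq> A" and c: "\<forall>s\<in>S. \<forall>t\<in>S. s * t = 0 \<and> (\<forall>c\<in>A. s * c * t = 0)"
  shows "v \<in> gid sc A S \<Longrightarrow> \<forall>u\<in>gid sc A S. u * v = 0"
proof (induction rule: gid.induct)
  case (gb s) then show ?case using gid_sq1[OF SA c] by auto
next
  case gz then show ?case by simp
next
  case (ga u v) then show ?case by (simp add: distrib_left)
next
  case (gn u) then show ?case by simp
next
  case (gs u c') then show ?case by (simp add: scr[symmetric])
next
  case (gl a v)
  show ?case
  proof
    fix u assume "u \<in> gid sc A S"
    then have "u * a \<in> gid sc A S" using gl gid.gr by blast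
    then have "u * a * v = 0" using gl by blast
    then show "u * (a * v) = 0" by (simp add: mult.assoc)
  qed
next
  case (gr a v)
  show ?case
  proof
    fix u assume "u \<in> gid sc A S"
    then have "u * v = 0" using gr by blast
    then have "u * v * a = 0" by simp
    then show "u * (v * a) = 0" by (simp add: mult.assoc)
  qed
qed

lemma gid_zero:
  assumes SA: "S \<subseteq> A" and c: "\<forall>s\<in>S. \<forall>t\<in>S. s * t = 0 \<and> (\<forall>c\<in>A. s * c * t = 0)"
    and s: "s \<in> S"
  shows "s = 0"
proof -
  have "gid sc A S = {0}"
    using sp gid_ideal[OF SA] gid_sq[OF SA c] unfolding semiprime_def by blast
  then show ?thesis using s gid.gb by blast
qed

lemma F1:
  assumes x: "x \<in> A" and h0: "\<forall>c\<in>A. x * c * x = 0"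
  shows "x = 0"
proof -
  have h: "\<And>c d. c \<in> A \<Longrightarrow> x * (c * (x * d)) = 0"
  proof -
    fix c d assume "c \<in> A"
    then have "x * c * x * d = 0" using h0 by simp
    then show "x * (c * (x * d)) = 0" by (simp add: mult.assoc)
  qed
  have h': "\<And>c. c \<in> A \<Longrightarrow> x * (c * x) = 0" using h0 by (simp add: mult.assoc)
  have h2: "\<And>c d. c \<in> A \<Longrightarrow> d \<in> A \<Longrightarrow> x * (c * (d * x)) = 0"
    using h'[of "_ * _"] A_facts(6) by (simp add: mult.assoc)
  have h3: "\<And>c d e. c \<in> A \<Longrightarrow> d \<in> A \<Longrightarrow> x * (c * (d * (x * e))) = 0"
    using h[of "_ * _"] A_facts(6) by (simp add: mult.assoc)
  have h4: "\<And>c d e. c \<in> A \<Longrightarrow> d \<in> A \<Longrightarrow> e \<in> A \<Longrightarrow> x * (c * (d * (e * x))) = 0"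
    using h2[of "_ * _"] A_facts(6) by (simp add: mult.assoc)
  have st1: "\<forall>a\<in>A. \<forall>b\<in>A. a * x * b = 0"
  proof -
    let ?S = "{a * x * b | a b. a \<in> A \<and> b \<in> A}"
    have SA: "?S \<subseteq> A" using x A_facts(6) by auto
    have c: "\<forall>s\<in>?S. \<forall>t\<in>?S. s * t = 0 \<and> (\<forall>c\<in>A. s * c * t = 0)"
    proof (intro ballI)
      fix s t assume "s \<in> ?S" "t \<in> ?S"
      then obtain a b a' b' where ab: "a \<in> A" "b \<in> A" "a' \<in> A" "b' \<in> A"
        and st: "s = a * x * b" "t = a' * x * b'" by blast
      have "x * ((b * a') * (x * b')) = 0" using h ab A_facts(6) by blast
      then have 1: "s * t = 0" using st by (simp add: mult.assoc)
      have "\<forall>c\<in>A. s * c * t = 0"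
      proof
        fix c assume "c \<in> A"
        then have "x * ((b * c * a') * (x * b')) = 0" using h ab A_facts(6) by blast
        then show "s * c * t = 0" using st by (simp add: mult.assoc)
      qed
      then show "s * t = 0 \<and> (\<forall>c\<in>A. s * c * t = 0)" using 1 by blast
    qed
    show ?thesis using gid_zero[OF SA c] by blast
  qed
  have st2: "\<forall>a\<in>A. a * x = 0 \<and> x * a = 0"
  proof -
    let ?S = "{a * x | a. a \<in> A} \<union> {x * b | b. b \<in> A}"
    have SA: "?S \<subseteq> A" using x A_facts(6) by auto
    have c: "\<forall>s\<in>?S. \<forall>t\<in>?S. s * t = 0 \<and> (\<forall>c\<in>A. s * c * t = 0)"
    proof (intro ballI)
      fix s t assume s: "s \<in> ?S" and t: "t \<in> ?S"
      show "s * t = 0 \<and> (\<forall>c\<in>A. s * c * t = 0)"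
      proof (cases "\<exists>a\<in>A. s = a * x")
        case True
        then obtain a where a: "a \<in> A" "s = a * x" by blast
        show ?thesis
        proof (cases "\<exists>a'\<in>A. t = a' * x")
          case True
          then obtain a' where a': "a' \<in> A" "t = a' * x" by blast
          show ?thesis using a a' by (simp add: mult.assoc h' h2)
        next
          case False
          then obtain b where b: "b \<in> A" "t = x * b" using t by blast
          have "x * b \<in> A" using x b A_facts(6) by blast
          then have "a * x * (x * b) = 0" using st1 a by blast
          moreover have "\<forall>c\<in>A. a * x * c * (x * b) = 0"
          proof
            fix c assume "c \<in> A"
            then have "x * (c * (x * b)) = 0" using h by blast
            then show "a * x * c * (x * b) = 0" by (simp add: mult.assoc)
          qed
          ultimately show ?thesis using a b by (simp add: mult.assoc)
        qed
      next
        case False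
        then obtain b where b: "b \<in> A" "s = x * b" using s by blast
        show ?thesis
        proof (cases "\<exists>a'\<in>A. t = a' * x")
          case True
          then obtain a' where a': "a' \<in> A" "t = a' * x" by blast
          show ?thesis using b a' by (simp add: mult.assoc h2 h4)
        next
          case False
          then obtain b' where b': "b' \<in> A" "t = x * b'" using t by blast
          show ?thesis using b b' by (simp add: mult.assoc h h3)
        qed
      qed
    qed
    show ?thesis
    proof
      fix a assume a: "a \<in> A"
      show "a * x = 0 \<and> x * a = 0"
        using gid_zero[OF SA c, of "a * x"] gid_zero[OF SA c, of "x * a"] a by blast
    qed
  qed
  have SA: "{x} \<subseteq> A" using x by auto
  have c: "\<forall>s\<in>{x}. \<forall>t\<in>{x}. s * t = 0 \<and> (\<forall>c\<in>A. s * c * t = 0)"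
    using st2 x h0 by auto
  show ?thesis using gid_zero[OF SA c] by blast
qed

end



context QS
begin

lemma dense_facts:
  assumes "dense_left_ideal sc A D"
  shows "D \<subseteq> A" "0 \<in> D" "x \<in> D \<Longrightarrow> y \<in> D \<Longrightarrow> x + y \<in> D" "x \<in> D \<Longrightarrow> - x \<in> D"
    "x \<in> D \<Longrightarrow> sc c x \<in> D" "a \<in> A \<Longrightarrow> x \<in> D \<Longrightarrow> a * x \<in> D"
proof -
  have L: "left_ideal sc A D" using assms by (simp add: dense_left_ideal_def)
  then have 1: "D \<subseteq> A" and 2: "submod sc D" and 3: "\<forall>a\<in>A. \<forall>x\<in>D. a * x \<in> D"
    by (simp_all add: left_ideal_def)
  show "D \<subseteq> A" by (rule 1)
  show "0 \<in> D" using 2 by (simp add: submod_def)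
  show "x \<in> D \<Longrightarrow> y \<in> D \<Longrightarrow> x + y \<in> D" using 2 by (simp add: submod_def)
  show "x \<in> D \<Longrightarrow> - x \<in> D" using 2 by (simp add: submod_def)
  show "x \<in> D \<Longrightarrow> sc c x \<in> D" using 2 by (simp add: submod_def)
  show "a \<in> A \<Longrightarrow> x \<in> D \<Longrightarrow> a * x \<in> D" using 3 by blast
qed

lemma left_idealI:
  assumes "D \<subseteq> A" "0 \<in> D" "\<And>x y. x \<in> D \<Longrightarrow> y \<in> D \<Longrightarrow> x + y \<in> D"
    "\<And>x. x \<in> D \<Longrightarrow> - x \<in> D" "\<And>c x. x \<in> D \<Longrightarrow> sc c x \<in> D"
    "\<And>a x. a \<in> A \<Longrightarrow> x \<in> D \<Longrightarrow> a * x \<in> D"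
  shows "left_ideal sc A D"
  unfolding left_ideal_def submod_def using assms by simp

lemma denseI:
  assumes "left_ideal sc A D"
    "\<And>p r. p \<in> A \<Longrightarrow> r \<in> A \<Longrightarrow> p \<noteq> 0 \<Longrightarrow> \<exists>a\<in>A. a * p \<noteq> 0 \<and> a * r \<in> D"
  shows "dense_left_ideal sc A D"
  unfolding dense_left_ideal_def using assms by simp

lemma F2:
  assumes x: "x \<in> A" and y: "y \<in> A" and h: "\<forall>c\<in>A. x * c * y = 0" and c: "c \<in> A"
  shows "y * c * x = 0"
proof -
  have p: "y * c * x \<in> A" using x y c A_facts(6) by blast
  have "\<forall>c'\<in>A. (y * c * x) * c' * (y * c * x) = 0"
  proof
    fix c' assume "c' \<in> A"
    then have "x * c' * y = 0" using h by blast
    then have "y * c * (x * c' * y) * c * x = 0" by simp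
    then show "(y * c * x) * c' * (y * c * x) = 0" by (simp add: mult.assoc)
  qed
  then show ?thesis using F1[OF p] by blast
qed

lemma QF1:
  assumes z: "z \<in> Qm" and h: "\<forall>c\<in>A. z * c * z = 0"
  shows "z = 0"
proof -
  obtain D where D: "dense_left_ideal sc A D" "\<forall>x\<in>D. x * z \<in> A" using U1[OF z] by blast
  have "\<forall>d\<in>D. d * z = 0"
  proof
    fix d assume d: "d \<in> D"
    have dz: "d * z \<in> A" using D d by blast
    have dA: "d \<in> A" using dense_facts(1)[OF D(1)] d by blast
    have "\<forall>c\<in>A. (d * z) * c * (d * z) = 0"
    proof
      fix c assume "c \<in> A"
      then have "c * d \<in> A" using dA A_facts(6) by blast
      then have "z * (c * d) * z = 0" using h by blast
      then have "d * (z * (c * d) * z) = 0" by simp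
      then show "(d * z) * c * (d * z) = 0" by (simp add: mult.assoc)
    qed
    then show "d * z = 0" using F1[OF dz] by blast
  qed
  then show ?thesis using U2[OF z D(1)] by blast
qed

lemma QF2:
  assumes x: "x \<in> A" and z: "z \<in> Qm" and h: "\<forall>c\<in>A. x * c * z = 0" and c: "c \<in> A"
  shows "z * c * x = 0"
proof -
  obtain D where D: "dense_left_ideal sc A D" "\<forall>x\<in>D. x * z \<in> A" using U1[OF z] by blast
  have zcx: "z * c * x \<in> Qm" using z c x AQm Q_facts(6) by blast
  have "\<forall>d\<in>D. d * (z * c * x) = 0"
  proof
    fix d assume d: "d \<in> D"
    have dz: "d * z \<in> A" using D d by blast
    have dA: "d \<in> A" using dense_facts(1)[OF D(1)] d by blast
    have "\<forall>c'\<in>A. x * c' * (d * z) = 0"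
    proof
      fix c' assume "c' \<in> A"
      then have "c' * d \<in> A" using dA A_facts(6) by blast
      then have "x * (c' * d) * z = 0" using h by blast
      then show "x * c' * (d * z) = 0" by (simp add: mult.assoc)
    qed
    then have "(d * z) * c * x = 0" using F2[OF x dz _ c] by blast
    then show "d * (z * c * x) = 0" by (simp add: mult.assoc)
  qed
  then show ?thesis using U2[OF zcx D(1)] by blast
qed

lemma dense_A: "dense_left_ideal sc A A"
proof (rule denseI)
  show "left_ideal sc A A"
  proof (rule left_idealI)
    show "A \<subseteq> A" by simp
    show "0 \<in> A" by (rule A_facts(1))
  qed (erule A_facts(2), assumption | erule A_facts(3) | erule A_facts(5) | erule A_facts(6), assumption)+
  fix p q assume p: "p \<in> A" and q: "q \<in> A" and p0: "p \<noteq> 0"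
  show "\<exists>a\<in>A. a * p \<noteq> 0 \<and> a * q \<in> A"
  proof (rule ccontr)
    assume "\<not> ?thesis"
    then have "\<forall>a\<in>A. a * p = 0" using q A_facts(6) by blast
    then have "\<forall>c\<in>A. p * c * p = 0" by (simp add: mult.assoc)
    then show False using F1[OF p] p0 by blast
  qed
qed

lemma dense_int:
  assumes D1: "dense_left_ideal sc A D1" and D2: "dense_left_ideal sc A D2"
  shows "dense_left_ideal sc A (D1 \<inter> D2)"
proof (rule denseI)
  show "left_ideal sc A (D1 \<inter> D2)"
  proof (rule left_idealI)
    show "D1 \<inter> D2 \<subseteq> A" using dense_facts(1)[OF D1] by blast
    show "0 \<in> D1 \<inter> D2" using dense_facts(2)[OF D1] dense_facts(2)[OF D2] by blast
    fix x y assume "x \<in> D1 \<inter> D2" "y \<in> D1 \<inter> D2"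
    then show "x + y \<in> D1 \<inter> D2" using dense_facts(3)[OF D1] dense_facts(3)[OF D2] by blast
  next
    fix x assume "x \<in> D1 \<inter> D2"
    then show "- x \<in> D1 \<inter> D2" using dense_facts(4)[OF D1] dense_facts(4)[OF D2] by blast
  next
    fix c x assume "x \<in> D1 \<inter> D2"
    then show "sc c x \<in> D1 \<inter> D2" using dense_facts(5)[OF D1] dense_facts(5)[OF D2] by blast
  next
    fix a x assume "a \<in> A" "x \<in> D1 \<inter> D2"
    then show "a * x \<in> D1 \<inter> D2" using dense_facts(6)[OF D1] dense_facts(6)[OF D2] by blast
  qed
  fix p r assume p: "p \<in> A" and r: "r \<in> A" and p0: "p \<noteq> 0"
  obtain a1 where a1: "a1 \<in> A" "a1 * p \<noteq> 0" "a1 * r \<in> D1" using dense_dens[OF D1 p r p0] by blast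
  have ap: "a1 * p \<in> A" using a1(1) p by (rule A_facts(6))
  have ar: "a1 * r \<in> A" using a1(1) r by (rule A_facts(6))
  obtain a2 where a2: "a2 \<in> A" "a2 * (a1 * p) \<noteq> 0" "a2 * (a1 * r) \<in> D2"
    using dense_dens[OF D2 ap ar a1(2)] by blast
  have "a2 * a1 \<in> A" using a2(1) a1(1) by (rule A_facts(6))
  moreover have "(a2 * a1) * p \<noteq> 0" using a2(2) by (simp add: mult.assoc)
  moreover have "a2 * (a1 * r) \<in> D1" using dense_facts(6)[OF D1 a2(1) a1(3)] .
  then have "(a2 * a1) * r \<in> D1 \<inter> D2" using a2(3) by (simp add: mult.assoc)
  ultimately show "\<exists>a\<in>A. a * p \<noteq> 0 \<and> a * r \<in> D1 \<inter> D2" by blast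
qed

lemma dense_col:
  assumes D: "dense_left_ideal sc A D" and u: "u \<in> Qm"
  shows "dense_left_ideal sc A {t \<in> A. t * u \<in> D}"
proof (rule denseI)
  show "left_ideal sc A {t \<in> A. t * u \<in> D}"
  proof (rule left_idealI)
    show "{t \<in> A. t * u \<in> D} \<subseteq> A" by blast
    show "0 \<in> {t \<in> A. t * u \<in> D}" using A_facts(1) dense_facts(2)[OF D] by simp
    fix x assume x: "x \<in> {t \<in> A. t * u \<in> D}"
    show "- x \<in> {t \<in> A. t * u \<in> D}" using x A_facts(3) dense_facts(4)[OF D] by simp
    fix c show "sc c x \<in> {t \<in> A. t * u \<in> D}" using x A_facts(5) dense_facts(5)[OF D]
      by (simp add: scl[symmetric])
  next
    fix x y assume x: "x \<in> {t \<in> A. t * u \<in> D}" and y: "y \<in> {t \<in> A. t * u \<in> D}"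
    show "x + y \<in> {t \<in> A. t * u \<in> D}" using x y A_facts(2) dense_facts(3)[OF D]
      by (simp add: distrib_right)
  next
    fix a x assume a: "a \<in> A" and x: "x \<in> {t \<in> A. t * u \<in> D}"
    show "a * x \<in> {t \<in> A. t * u \<in> D}"
      using a x A_facts(6) dense_facts(6)[OF D] by (simp add: mult.assoc)
  qed
  fix p r assume p: "p \<in> A" and r: "r \<in> A" and p0: "p \<noteq> 0"
  obtain Du where Du: "dense_left_ideal sc A Du" "\<forall>x\<in>Du. x * u \<in> A" using U1[OF u] by blast
  obtain a1 where a1: "a1 \<in> A" "a1 * p \<noteq> 0" "a1 * r \<in> Du" using dense_dens[OF Du(1) p r p0] by blast
  have ap: "a1 * p \<in> A" using a1(1) p by (rule A_facts(6))
  have aru: "a1 * r * u \<in> A" using Du(2) a1(3) by blast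
  obtain a2 where a2: "a2 \<in> A" "a2 * (a1 * p) \<noteq> 0" "a2 * (a1 * r * u) \<in> D"
    using dense_dens[OF D ap aru a1(2)] by blast
  have "a2 * a1 \<in> A" using a2(1) a1(1) by (rule A_facts(6))
  moreover have "(a2 * a1) * p \<noteq> 0" using a2(2) by (simp add: mult.assoc)
  moreover have "(a2 * a1) * r \<in> A" using calculation(1) r by (rule A_facts(6))
  moreover have "(a2 * a1) * r * u \<in> D" using a2(3) by (simp add: mult.assoc)
  ultimately show "\<exists>a\<in>A. a * p \<noteq> 0 \<and> a * r \<in> {t \<in> A. t * u \<in> D}" by blast
qed

lemma dense_list:
  "set xs \<subseteq> Qm \<Longrightarrow> \<exists>D. dense_left_ideal sc A D \<and> (\<forall>x\<in>set xs. \<forall>d\<in>D. d * x \<in> A)"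
proof (induction xs)
  case Nil
  have "\<forall>x\<in>set []. \<forall>d\<in>A. d * x \<in> A" by simp
  then show ?case using dense_A by blast
next
  case (Cons x xs)
  have "set xs \<subseteq> Qm" using Cons.prems by simp
  then obtain D where D: "dense_left_ideal sc A D" "\<forall>x\<in>set xs. \<forall>d\<in>D. d * x \<in> A"
    using Cons.IH by blast
  have "x \<in> Qm" using Cons.prems by simp
  then obtain Dx where Dx: "dense_left_ideal sc A Dx" "\<forall>d\<in>Dx. d * x \<in> A" using U1 by blast
  have "\<forall>y\<in>set (x # xs). \<forall>d\<in>D \<inter> Dx. d * y \<in> A" using D(2) Dx(2) by simp
  then show ?case using dense_int[OF D(1) Dx(1)] by blast
qed

end



definition rm :: "('k::comm_ring_1 \<Rightarrow> 'a::ring \<Rightarrow> 'a) \<Rightarrow> 'a \<Rightarrow> 'a \<times> 'k \<Rightarrow> 'a" where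
  "rm sc y v = y * fst v + sc (snd v) y"
definition lm :: "('k::comm_ring_1 \<Rightarrow> 'a::ring \<Rightarrow> 'a) \<Rightarrow> 'a \<times> 'k \<Rightarrow> 'a \<Rightarrow> 'a" where
  "lm sc u y = fst u * y + sc (snd u) y"
definition Sa :: "('k::comm_ring_1 \<Rightarrow> 'a::ring \<Rightarrow> 'a) \<Rightarrow> ('a \<times> ('a \<times> 'k)) list \<Rightarrow> 'a \<Rightarrow> 'a" where
  "Sa sc ts y = (\<Sum>p\<leftarrow>ts. fst p * rm sc y (snd p))"
definition Tm :: "('k::comm_ring_1 \<Rightarrow> 'a::ring \<Rightarrow> 'a) \<Rightarrow> (('a \<times> 'k) \<times> ('a \<times> 'k)) list \<Rightarrow> 'a \<Rightarrow> 'a" where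
  "Tm sc ts y = (\<Sum>p\<leftarrow>ts. lm sc (fst p) (rm sc y (snd p)))"

lemma Sa_Nil[simp]: "Sa sc [] y = 0" by (simp add: Sa_def)
lemma Sa_Cons[simp]: "Sa sc (p # ts) y = fst p * rm sc y (snd p) + Sa sc ts y" by (simp add: Sa_def)
lemma Tm_Nil[simp]: "Tm sc [] y = 0" by (simp add: Tm_def)
lemma Tm_Cons[simp]: "Tm sc (p # ts) y = lm sc (fst p) (rm sc y (snd p)) + Tm sc ts y"
  by (simp add: Tm_def)

context QS
begin

lemma rm_left: "rm sc (p * y) b = p * rm sc y b"
  by (simp add: rm_def distrib_left mult.assoc scr)

lemma rm_Qm: "y \<in> Qm \<Longrightarrow> fst b \<in> Qm \<Longrightarrow> rm sc y b \<in> Qm"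
  unfolding rm_def by (intro Q_facts(2) Q_facts(6) Q_facts(5))

lemma lm_Qm: "y \<in> Qm \<Longrightarrow> fst b \<in> Qm \<Longrightarrow> lm sc b y \<in> Qm"
  unfolding lm_def by (intro Q_facts(2) Q_facts(6) Q_facts(5))

lemma Sa_Qm: "y \<in> Qm \<Longrightarrow> \<forall>p\<in>set ts. fst p \<in> Qm \<and> fst (snd p) \<in> Qm \<Longrightarrow> Sa sc ts y \<in> Qm"
proof (induction ts)
  case Nil then show ?case using Q_facts(1) by simp
next
  case (Cons p ts)
  have "fst p * rm sc y (snd p) \<in> Qm" using Cons.prems rm_Qm Q_facts(6) by simp
  moreover have "Sa sc ts y \<in> Qm" using Cons by simp
  ultimately show ?case using Q_facts(2) by simp
qed

lemma Tm_Qm: "y \<in> Qm \<Longrightarrow> \<forall>p\<in>set ts. fst (fst p) \<in> Qm \<and> fst (snd p) \<in> Qm \<Longrightarrow> Tm sc ts y \<in> Qm"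
proof (induction ts)
  case Nil then show ?case using Q_facts(1) by simp
next
  case (Cons p ts)
  have "lm sc (fst p) (rm sc y (snd p)) \<in> Qm" using Cons.prems rm_Qm lm_Qm by simp
  moreover have "Tm sc ts y \<in> Qm" using Cons by simp
  ultimately show ?case using Q_facts(2) by simp
qed

lemma SX_gen: "Sa sc ts (m * y) - m' * Sa sc ts y
   = (\<Sum>p\<leftarrow>ts. (fst p * m - m' * fst p) * rm sc y (snd p))"
proof (induction ts)
  case Nil then show ?case by simp
next
  case (Cons p ts)
  have "Sa sc (p # ts) (m * y) - m' * Sa sc (p # ts) y
     = ((fst p * m - m' * fst p) * rm sc y (snd p)) + (Sa sc ts (m * y) - m' * Sa sc ts y)"
    by (simp add: rm_left algebra_simps mult.assoc)
  then show ?case using Cons by simp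
qed

lemma Sa_zero_left: "(\<forall>p\<in>set ts. z * fst p = 0) \<Longrightarrow> z * Sa sc ts y = 0"
proof (induction ts)
  case Nil then show ?case by simp
next
  case (Cons p ts)
  have "z * (fst p * rm sc y (snd p)) = (z * fst p) * rm sc y (snd p)" by (simp add: mult.assoc)
  then show ?case using Cons by (simp add: distrib_left)
qed

lemma core:
  "length ts = n \<Longrightarrow> (\<forall>p\<in>set ts. fst p \<in> A \<and> fst (snd p) \<in> Qm) \<Longrightarrow> (\<forall>y\<in>A. Sa sc ts y = 0)
   \<Longrightarrow> q \<in> Qm \<Longrightarrow> Sa sc ts q = 0"
proof (induction n arbitrary: ts q rule: less_induct)
  case (less n ts q)
  note len = less.prems(1) and co = less.prems(2) and zA = less.prems(3) and q = less.prems(4)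
  have coQ: "\<forall>p\<in>set ts. fst p \<in> Qm \<and> fst (snd p) \<in> Qm" using co AQm by blast
  define w where "w = Sa sc ts q"
  have wQ: "w \<in> Qm" unfolding w_def using Sa_Qm[OF q coQ] .
  have key: "w * c * ak = 0" if mem: "(ak, bk) \<in> set ts" and c: "c \<in> A" for ak bk c
  proof -
    have akA: "ak \<in> A" using co mem by auto
    have akQ: "ak \<in> Qm" using akA AQm by blast
    obtain Dq where Dq: "dense_left_ideal sc A Dq" "\<forall>x\<in>Dq. x * q \<in> A" using U1[OF q] by blast
    define E where "E = {t \<in> A. t * ak \<in> Dq}"
    have E: "dense_left_ideal sc A E" unfolding E_def using dense_col[OF Dq(1) akQ] .
    have h1: "ak * t * w = 0" if tE: "t \<in> E" for t
    proof -
      have tA: "t \<in> A" and tDq: "t * ak \<in> Dq" using tE by (auto simp: E_def)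
      define X where "X = map (\<lambda>p. (fst p * (t * ak) - (ak * t) * fst p, snd p)) (remove1 (ak, bk) ts)"
      have SX: "Sa sc X y = Sa sc ts ((t * ak) * y) - (ak * t) * Sa sc ts y" for y
      proof -
        let ?g = "\<lambda>p. (fst p * (t * ak) - (ak * t) * fst p) * rm sc y (snd p)"
        have "Sa sc ts ((t * ak) * y) - (ak * t) * Sa sc ts y = (\<Sum>p\<leftarrow>ts. ?g p)"
          by (rule SX_gen)
        also have "\<dots> = ?g (ak, bk) + (\<Sum>p\<leftarrow>remove1 (ak, bk) ts. ?g p)"
          by (rule sum_list_map_remove1[OF mem])
        also have "?g (ak, bk) = 0" by (simp add: mult.assoc)
        also have "(\<Sum>p\<leftarrow>remove1 (ak, bk) ts. ?g p) = Sa sc X y"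
          by (simp add: X_def Sa_def o_def)
        finally show ?thesis by simp
      qed
      have "0 < length ts" using mem by (rule length_pos_if_in_set)
      then have "0 < n" using len by simp
      then have lenX: "length X < n" using len mem by (simp add: X_def length_remove1)
      have coX: "\<forall>p\<in>set X. fst p \<in> A \<and> fst (snd p) \<in> Qm"
      proof
        fix p assume "p \<in> set X"
        then have "p \<in> (\<lambda>p. (fst p * (t * ak) - (ak * t) * fst p, snd p)) ` set (remove1 (ak, bk) ts)"
          unfolding X_def by (simp only: set_map)
        then obtain p0 where p0r: "p0 \<in> set (remove1 (ak, bk) ts)"
          and p0e: "p = (fst p0 * (t * ak) - (ak * t) * fst p0, snd p0)"
          by (rule imageE)
        have p0: "p0 \<in> set ts" using subsetD[OF set_remove1_subset p0r] .
        have a1: "fst p0 \<in> A" and a2: "fst (snd p0) \<in> Qm" using co p0 by auto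
        have ta: "t * ak \<in> A" using tA akA by (rule A_facts(6))
        have at: "ak * t \<in> A" using akA tA by (rule A_facts(6))
        have "fst p0 * (t * ak) - (ak * t) * fst p0 \<in> A"
          using A_facts(6)[OF a1 ta] A_facts(6)[OF at a1] by (rule A_facts(4))
        then show "fst p \<in> A \<and> fst (snd p) \<in> Qm" using p0e a2 by simp
      qed
      have zX: "\<forall>y\<in>A. Sa sc X y = 0"
      proof
        fix y assume y: "y \<in> A"
        have "t * ak \<in> A" using tA akA A_facts(6) by blast
        then have "(t * ak) * y \<in> A" using y A_facts(6) by blast
        then show "Sa sc X y = 0" using SX zA y by simp
      qed
      have "Sa sc X q = 0" using less.IH[OF lenX refl coX zX q] .
      moreover have "(t * ak) * q \<in> A" using Dq(2) tDq by blast
      then have "Sa sc ts ((t * ak) * q) = 0" using zA by blast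
      ultimately have "(ak * t) * w = 0" using SX[of q] by (simp add: w_def)
      then show ?thesis .
    qed
    have h2: "(e * w) * c * ak = 0" if eE: "e \<in> E" for e
    proof -
      have eA: "e \<in> A" using eE dense_facts(1)[OF E] by blast
      have ew: "e * w \<in> Qm" using eA AQm wQ Q_facts(6) by blast
      have "\<forall>c'\<in>A. ak * c' * (e * w) = 0"
      proof
        fix c' assume c': "c' \<in> A"
        have "c' * e \<in> E" using dense_facts(6)[OF E c' eE] .
        then have "ak * (c' * e) * w = 0" using h1 by blast
        then show "ak * c' * (e * w) = 0" by (simp add: mult.assoc)
      qed
      then show ?thesis using QF2[OF akA ew _ c] by blast
    qed
    have wca: "w * c * ak \<in> Qm" using wQ c akA AQm Q_facts(6) by blast
    have "\<forall>e\<in>E. e * (w * c * ak) = 0" using h2 by (simp add: mult.assoc)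
    then show ?thesis using U2[OF wca E] by blast
  qed
  have "\<forall>c\<in>A. w * c * w = 0"
  proof
    fix c assume c: "c \<in> A"
    have "\<forall>p\<in>set ts. (w * c) * fst p = 0"
    proof
      fix p assume "p \<in> set ts"
      then have "(fst p, snd p) \<in> set ts" by simp
      then show "(w * c) * fst p = 0" using key c by blast
    qed
    then have "(w * c) * Sa sc ts q = 0" by (rule Sa_zero_left)
    then show "w * c * w = 0" by (simp add: w_def)
  qed
  then have "w = 0" using QF1[OF wQ] by blast
  then show ?case by (simp add: w_def)
qed

lemma lm_left: "d * lm sc u z = (d * fst u + sc (snd u) d) * z"
  by (simp add: lm_def distrib_left distrib_right mult.assoc scr[symmetric] scl[symmetric])

lemma Tm_to_Sa: "d * Tm sc ts y = Sa sc (map (\<lambda>p. (d * fst (fst p) + sc (snd (fst p)) d, snd p)) ts) y"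
proof (induction ts)
  case Nil then show ?case by simp
next
  case (Cons p ts)
  then show ?case by (simp add: distrib_left lm_left)
qed

lemma transfer:
  assumes co: "\<forall>p\<in>set ts. fst (fst p) \<in> Qm \<and> fst (snd p) \<in> Qm"
    and z: "\<forall>y\<in>A. Tm sc ts y = 0" and q: "q \<in> Qm"
  shows "Tm sc ts q = 0"
proof -
  have "set (map (\<lambda>p. fst (fst p)) ts) \<subseteq> Qm" using co by auto
  then obtain D where D: "dense_left_ideal sc A D" "\<forall>x\<in>set (map (\<lambda>p. fst (fst p)) ts). \<forall>d\<in>D. d * x \<in> A"
    using dense_list by blast
  have TQ: "Tm sc ts q \<in> Qm" using Tm_Qm[OF q co] .
  have "\<forall>d\<in>D. d * Tm sc ts q = 0"
  proof
    fix d assume d: "d \<in> D"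
    have dA: "d \<in> A" using d dense_facts(1)[OF D(1)] by blast
    let ?ts = "map (\<lambda>p. (d * fst (fst p) + sc (snd (fst p)) d, snd p)) ts"
    have co': "\<forall>p\<in>set ?ts. fst p \<in> A \<and> fst (snd p) \<in> Qm"
    proof
      fix p assume "p \<in> set ?ts"
      then obtain p0 where p0: "p0 \<in> set ts" "p = (d * fst (fst p0) + sc (snd (fst p0)) d, snd p0)" by auto
      have "d * fst (fst p0) \<in> A" using D(2) p0(1) d by auto
      moreover have "sc (snd (fst p0)) d \<in> A" using dA A_facts(5) by blast
      ultimately show "fst p \<in> A \<and> fst (snd p) \<in> Qm" using p0 co A_facts(2) by auto
    qed
    have z': "\<forall>y\<in>A. Sa sc ?ts y = 0" using z Tm_to_Sa[symmetric] by simp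
    show "d * Tm sc ts q = 0" using core[OF refl co' z' q] Tm_to_Sa by simp
  qed
  then show ?thesis using U2[OF TQ D(1)] by blast
qed

end



definition mulU :: "('k::comm_ring_1 \<Rightarrow> 'a::ring \<Rightarrow> 'a) \<Rightarrow> 'a \<times> 'k \<Rightarrow> 'a \<times> 'k \<Rightarrow> 'a \<times> 'k" where
  "mulU sc u v = (fst u * fst v + sc (snd v) (fst u) + sc (snd u) (fst v), snd u * snd v)"
definition scU :: "('k::comm_ring_1 \<Rightarrow> 'a::ring \<Rightarrow> 'a) \<Rightarrow> 'k \<Rightarrow> 'a \<times> 'k \<Rightarrow> 'a \<times> 'k" where
  "scU sc c u = (sc c (fst u), c * snd u)"
definition repr :: "('k::comm_ring_1 \<Rightarrow> 'a::ring \<Rightarrow> 'a) \<Rightarrow> 'a set \<Rightarrow> ('a \<Rightarrow> 'a) \<Rightarrow> bool" where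
  "repr sc Qm f \<longleftrightarrow> (\<exists>ts. (\<forall>p\<in>set ts. fst (fst p) \<in> Qm \<and> fst (snd p) \<in> Qm) \<and> f = Tm sc ts)"

lemma Tm_append: "Tm sc (xs @ ys) y = Tm sc xs y + Tm sc ys y"
  by (induction xs) (simp_all add: add.assoc)

context QS
begin

lemma lm_lm: "lm sc u1 (lm sc u2 y) = lm sc (mulU sc u1 u2) y"
proof -
  have "fst u1 * sc (snd u2) y = sc (snd u2) (fst u1) * y" by (simp only: scl[symmetric] scr[symmetric])
  moreover have "sc (snd u1) (fst u2 * y) = sc (snd u1) (fst u2) * y" by (simp add: scl)
  ultimately show ?thesis
    by (simp add: lm_def mulU_def distrib_left distrib_right scale_right_distrib mult.assoc add.assoc)
qed

lemma rm_rm: "rm sc (rm sc y v2) v1 = rm sc y (mulU sc v2 v1)"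
proof -
  have "y * sc (snd v1) (fst v2) = sc (snd v1) (y * fst v2)" by (simp add: scr)
  moreover have "y * sc (snd v2) (fst v1) = sc (snd v2) y * fst v1" by (metis scl scr)
  ultimately show ?thesis
    by (simp add: rm_def mulU_def distrib_left distrib_right scale_right_distrib mult.assoc
        mult.commute add_ac)
qed

lemma lm_rm: "lm sc u (rm sc y v) = rm sc (lm sc u y) v"
proof -
  have "fst u * sc (snd v) y = sc (snd v) (fst u * y)" by (simp add: scr)
  moreover have "sc (snd u) (y * fst v) = sc (snd u) y * fst v" by (simp add: scl)
  ultimately show ?thesis
    by (simp add: rm_def lm_def distrib_left distrib_right scale_right_distrib mult.assoc
        scale_left_commute add_ac mult.commute)
qed

lemma lm_add: "lm sc u (a + b) = lm sc u a + lm sc u b"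
  by (simp add: lm_def distrib_left scale_right_distrib add_ac)
lemma rm_add: "rm sc (a + b) v = rm sc a v + rm sc b v"
  by (simp add: rm_def distrib_right scale_right_distrib add_ac)
lemma lm_zero: "lm sc u 0 = 0" by (simp add: lm_def)
lemma rm_zero: "rm sc 0 v = 0" by (simp add: rm_def)
lemma lm_sc: "lm sc u (sc c a) = sc c (lm sc u a)"
  by (simp add: lm_def scale_right_distrib scr[symmetric] mult.commute)
lemma rm_sc: "rm sc (sc c a) v = sc c (rm sc a v)"
  by (simp add: rm_def scale_right_distrib scl[symmetric] mult.commute)
lemma sc_lm: "sc c (lm sc u a) = lm sc (scU sc c u) a"
  by (simp add: lm_def scU_def scale_right_distrib scl)

lemma Tm_add: "Tm sc ts (a + b) = Tm sc ts a + Tm sc ts b"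
  by (induction ts) (simp_all add: lm_add rm_add add_ac)
lemma Tm_zero: "Tm sc ts 0 = 0"
  by (induction ts) (simp_all add: lm_zero rm_zero)
lemma Tm_sc: "Tm sc ts (sc c a) = sc c (Tm sc ts a)"
  by (induction ts) (simp_all add: lm_sc rm_sc scale_right_distrib)

lemma Tm_single_comp:
  "lm sc u (rm sc (Tm sc ts y) v) = Tm sc (map (\<lambda>p. (mulU sc u (fst p), mulU sc (snd p) v)) ts) y"
proof (induction ts)
  case Nil then show ?case by (simp add: lm_zero rm_zero)
next
  case (Cons p ts)
  have "lm sc u (rm sc (lm sc (fst p) (rm sc y (snd p))) v)
      = lm sc (mulU sc u (fst p)) (rm sc y (mulU sc (snd p) v))"
    by (simp add: lm_rm[symmetric] lm_lm rm_rm)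
  then show ?case using Cons by (simp add: rm_add lm_add)
qed

lemma Tm_comp:
  "Tm sc ts1 (Tm sc ts2 y) =
   Tm sc (concat (map (\<lambda>p. map (\<lambda>p'. (mulU sc (fst p) (fst p'), mulU sc (snd p') (snd p))) ts2) ts1)) y"
proof (induction ts1)
  case Nil then show ?case by simp
next
  case (Cons p ts1)
  then show ?case by (simp add: Tm_append Tm_single_comp)
qed

lemma Tm_scale: "sc c (Tm sc ts y) = Tm sc (map (\<lambda>p. (scU sc c (fst p), snd p)) ts) y"
  by (induction ts) (simp_all add: scale_right_distrib sc_lm)

lemma mulU_Q: "fst u \<in> Qm \<Longrightarrow> fst v \<in> Qm \<Longrightarrow> fst (mulU sc u v) \<in> Qm"
  unfolding mulU_def by (simp add: Q_facts(2) Q_facts(5) Q_facts(6))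

lemma repr_id: "repr sc Qm id"
proof -
  have "id = Tm sc [((0, 1), (0, 1))]" by (rule ext) (simp add: lm_def rm_def)
  moreover have "\<forall>p\<in>set [((0::'a, 1::'k), (0::'a, 1::'k))]. fst (fst p) \<in> Qm \<and> fst (snd p) \<in> Qm"
    using Q_facts(1) by simp
  ultimately show ?thesis unfolding repr_def by blast
qed

lemma repr_ad: "x \<in> Qm \<Longrightarrow> repr sc Qm (lie_br x)"
proof -
  assume x: "x \<in> Qm"
  have "lie_br x = Tm sc [((x, 0), (0, 1)), ((0, -1), (x, 0))]"
    by (rule ext) (simp add: lm_def rm_def lie_br_def)
  moreover have "\<forall>p\<in>set [((x, 0::'k), (0::'a, 1::'k)), ((0::'a, -1::'k), (x, 0::'k))]. fst (fst p) \<in> Qm \<and> fst (snd p) \<in> Qm"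
    using Q_facts(1) x by simp
  ultimately show ?thesis unfolding repr_def by blast
qed

lemma repr_adr: "b \<in> Qm \<Longrightarrow> repr sc Qm (\<lambda>y. lie_br y b)"
proof -
  assume b: "b \<in> Qm"
  have "(\<lambda>y. lie_br y b) = Tm sc [((0, 1), (b, 0)), ((-b, 0), (0, 1))]"
    by (rule ext) (simp add: lm_def rm_def lie_br_def)
  moreover have "\<forall>p\<in>set [((0::'a, 1::'k), (b, 0::'k)), ((-b, 0::'k), (0::'a, 1::'k))]. fst (fst p) \<in> Qm \<and> fst (snd p) \<in> Qm"
    using Q_facts(1) Q_facts(3)[OF b] b by simp
  ultimately show ?thesis unfolding repr_def by blast
qed

lemma repr_add: "repr sc Qm f \<Longrightarrow> repr sc Qm g \<Longrightarrow> repr sc Qm (\<lambda>y. f y + g y)"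
proof -
  assume "repr sc Qm f" "repr sc Qm g"
  then obtain ts1 ts2 where t1: "\<forall>p\<in>set ts1. fst (fst p) \<in> Qm \<and> fst (snd p) \<in> Qm" "f = Tm sc ts1"
    and t2: "\<forall>p\<in>set ts2. fst (fst p) \<in> Qm \<and> fst (snd p) \<in> Qm" "g = Tm sc ts2"
    unfolding repr_def by blast
  have "(\<lambda>y. f y + g y) = Tm sc (ts1 @ ts2)" using t1(2) t2(2) by (simp add: Tm_append fun_eq_iff)
  moreover have "\<forall>p\<in>set (ts1 @ ts2). fst (fst p) \<in> Qm \<and> fst (snd p) \<in> Qm" using t1(1) t2(1) by auto
  ultimately show ?thesis unfolding repr_def by blast
qed

lemma repr_scale: "repr sc Qm f \<Longrightarrow> repr sc Qm (\<lambda>y. sc c (f y))"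
proof -
  assume "repr sc Qm f"
  then obtain ts where t: "\<forall>p\<in>set ts. fst (fst p) \<in> Qm \<and> fst (snd p) \<in> Qm" "f = Tm sc ts"
    unfolding repr_def by blast
  have "(\<lambda>y. sc c (f y)) = Tm sc (map (\<lambda>p. (scU sc c (fst p), snd p)) ts)"
    using t(2) by (simp add: Tm_scale fun_eq_iff)
  moreover have "\<forall>p\<in>set (map (\<lambda>p. (scU sc c (fst p), snd p)) ts). fst (fst p) \<in> Qm \<and> fst (snd p) \<in> Qm"
    using t(1) by (auto simp: scU_def intro: Q_facts(5))
  ultimately show ?thesis unfolding repr_def by blast
qed

lemma repr_comp: "repr sc Qm f \<Longrightarrow> repr sc Qm g \<Longrightarrow> repr sc Qm (f \<circ> g)"
proof -
  assume "repr sc Qm f" "repr sc Qm g"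
  then obtain ts1 ts2 where t1: "\<forall>p\<in>set ts1. fst (fst p) \<in> Qm \<and> fst (snd p) \<in> Qm" "f = Tm sc ts1"
    and t2: "\<forall>p\<in>set ts2. fst (fst p) \<in> Qm \<and> fst (snd p) \<in> Qm" "g = Tm sc ts2"
    unfolding repr_def by blast
  let ?ts = "concat (map (\<lambda>p. map (\<lambda>p'. (mulU sc (fst p) (fst p'), mulU sc (snd p') (snd p))) ts2) ts1)"
  have "f \<circ> g = Tm sc ?ts" using t1(2) t2(2) by (simp add: Tm_comp fun_eq_iff)
  moreover have "\<forall>p\<in>set ?ts. fst (fst p) \<in> Qm \<and> fst (snd p) \<in> Qm"
    using t1(1) t2(1) by (auto intro!: mulU_Q)
  ultimately show ?thesis unfolding repr_def by blast
qed

lemma mult_alg_repr: "L \<subseteq> Qm \<Longrightarrow> f \<in> mult_alg sc L \<Longrightarrow> repr sc Qm f"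
proof -
  assume L: "L \<subseteq> Qm"
  show "f \<in> mult_alg sc L \<Longrightarrow> repr sc Qm f"
  proof (induction rule: mult_alg.induct)
    case mult_id then show ?case by (rule repr_id)
  next
    case (mult_ad x) then show ?case using L repr_ad by blast
  next
    case (mult_comp f g) then show ?case using repr_comp by blast
  next
    case (mult_add f g) then show ?case using repr_add by blast
  next
    case (mult_scale f c) then show ?case using repr_scale by blast
  qed
qed

lemma repr_transfer: "repr sc Qm f \<Longrightarrow> \<forall>y\<in>A. f y = 0 \<Longrightarrow> q \<in> Qm \<Longrightarrow> f q = 0"
  unfolding repr_def using transfer by blast

lemma repr_lin:
  assumes "repr sc Qm f"
  shows "f 0 = 0" "f (a + b) = f a + f b" "f (sc c a) = sc c (f a)"
  using assms unfolding repr_def by (auto simp: Tm_zero Tm_add Tm_sc)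

lemma mult_alg_closed:
  assumes br: "\<And>x y. x \<in> L \<Longrightarrow> y \<in> L \<Longrightarrow> lie_br x y \<in> L"
    and ad: "\<And>x y. x \<in> L \<Longrightarrow> y \<in> L \<Longrightarrow> x + y \<in> L"
    and scl': "\<And>c x. x \<in> L \<Longrightarrow> sc c x \<in> L"
  shows "f \<in> mult_alg sc L \<Longrightarrow> \<forall>y\<in>L. f y \<in> L"
proof (induction rule: mult_alg.induct)
  case mult_id then show ?case by simp
next
  case (mult_ad x) then show ?case using br by blast
next
  case (mult_comp f g) then show ?case by simp
next
  case (mult_add f g) then show ?case using ad by blast
next
  case (mult_scale f c) then show ?case using scl' by blast
qed

lemma lie_br_anti: "lie_br x y = - lie_br y x"
  by (simp add: lie_br_def)

end



theorem mainTheorem14: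
  fixes sc :: "'k::comm_ring_1 \<Rightarrow> 'a::ring \<Rightarrow> 'a"
    and A Qm Q :: "'a set"
  assumes "phi_algebra sc"
    and "subalgebra sc A"
    and "semiprime sc A"
    and "is_Qlmax sc A Qm"
    and "subalgebra sc Q" and "A \<subseteq> Q" and "Q \<subseteq> Qm"
  shows "lie_center A = lie_center Q \<inter> A
    \<and> dense_mod_center sc A Q
    \<and> dense_mod_center sc (comm_span sc A) (comm_span sc Q)"
proof -
  interpret QS sc A Qm using assms(1-4) by unfold_locales
  note subQ = assms(5) and AQ = assms(6) and QQm = assms(7)
  note QF = subalg_facts[OF subQ]
  have brQ: "lie_br x y \<in> Q" if "x \<in> Q" "y \<in> Q" for x y
    unfolding lie_br_def using that by (intro QF(4) QF(6))
  have P1: "lie_center A = lie_center Q \<inter> A"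
  proof
    show "lie_center A \<subseteq> lie_center Q \<inter> A"
    proof
      fix z assume z: "z \<in> lie_center A"
      then have zA: "z \<in> A" and zc: "\<forall>x\<in>A. lie_br z x = 0" by (auto simp: lie_center_def)
      have zQm: "z \<in> Qm" using zA AQm by blast
      have "\<forall>x\<in>Q. lie_br z x = 0"
      proof
        fix x assume "x \<in> Q"
        then have "x \<in> Qm" using QQm by blast
        then show "lie_br z x = 0" using repr_transfer[OF repr_ad[OF zQm] zc] by blast
      qed
      then show "z \<in> lie_center Q \<inter> A" using zA AQ by (auto simp: lie_center_def)
    qed
  next
    show "lie_center Q \<inter> A \<subseteq> lie_center A" using AQ by (auto simp: lie_center_def)
  qed
  have P2: "dense_mod_center sc A Q"
    unfolding dense_mod_center_def
  proof (intro ballI impI)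
    fix \<mu> y assume mu: "\<mu> \<in> mult_alg sc Q" and h: "\<forall>y\<in>A. \<mu> y \<in> lie_center Q" and y: "y \<in> Q"
    have closed: "\<forall>y\<in>Q. \<mu> y \<in> Q"
      using mult_alg_closed[OF brQ QF(2) QF(5) mu] by blast
    have "\<forall>x\<in>Q. lie_br (\<mu> y) x = 0"
    proof
      fix x assume x: "x \<in> Q"
      have "lie_br x \<circ> \<mu> \<in> mult_alg sc Q" using x mu by (intro mult_alg.intros)
      then have r: "repr sc Qm (lie_br x \<circ> \<mu>)" using mult_alg_repr QQm by blast
      have "\<forall>a\<in>A. (lie_br x \<circ> \<mu>) a = 0"
      proof
        fix a assume "a \<in> A"
        then have "lie_br (\<mu> a) x = 0" using h x by (auto simp: lie_center_def)
        then show "(lie_br x \<circ> \<mu>) a = 0" by (simp add: lie_br_anti[of x])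
      qed
      then have "lie_br x (\<mu> y) = 0" using repr_transfer[OF r] y QQm by auto
      then show "lie_br (\<mu> y) x = 0" by (simp add: lie_br_anti[of "\<mu> y"])
    qed
    then show "\<mu> y \<in> lie_center Q" using closed y by (auto simp: lie_center_def)
  qed
  have P3: "dense_mod_center sc (comm_span sc A) (comm_span sc Q)"
    unfolding dense_mod_center_def
  proof (intro ballI impI)
    let ?CQ = "{lie_br x y | x y. x \<in> Q \<and> y \<in> Q}"
    let ?L2 = "comm_span sc Q"
    let ?L1 = "comm_span sc A"
    have L2def: "?L2 = span ?CQ" by (simp add: comm_span_def)
    have L1def: "?L1 = span {lie_br x y | x y. x \<in> A \<and> y \<in> A}" by (simp add: comm_span_def)
    have subQ': "subspace Q" unfolding subspace_def using QF(1) QF(2) QF(5) by blast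
    have L2Q: "?L2 \<subseteq> Q" unfolding L2def by (rule span_minimal) (use brQ subQ' in auto)
    have L2Qm: "?L2 \<subseteq> Qm" using L2Q QQm by blast
    fix \<mu> y assume mu: "\<mu> \<in> mult_alg sc ?L2" and h: "\<forall>y\<in>?L1. \<mu> y \<in> lie_center ?L2"
      and y: "y \<in> ?L2"
    have brL2: "lie_br x y \<in> ?L2" if "x \<in> ?L2" "y \<in> ?L2" for x y
    proof -
      have "lie_br x y \<in> ?CQ" using that L2Q by blast
      then show ?thesis unfolding L2def by (rule span_base)
    qed
    have closed: "\<forall>y\<in>?L2. \<mu> y \<in> ?L2"
      using mult_alg_closed[OF brL2 _ _ mu] span_add span_scale L2def by auto
    have "\<forall>x\<in>?L2. lie_br (\<mu> y) x = 0"
    proof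
      fix x assume x: "x \<in> ?L2"
      define \<nu> where "\<nu> = lie_br x \<circ> \<mu>"
      have "\<nu> \<in> mult_alg sc ?L2" unfolding \<nu>_def using x mu by (intro mult_alg.intros)
      then have r: "repr sc Qm \<nu>" using mult_alg_repr L2Qm by blast
      have k1: "\<nu> z = 0" if z: "z \<in> ?L1" for z
      proof -
        have "lie_br (\<mu> z) x = 0" using h x z by (auto simp: lie_center_def)
        then show "\<nu> z = 0" unfolding \<nu>_def by (simp add: lie_br_anti[of x])
      qed
      have s1: "\<nu> (lie_br q b) = 0" if b: "b \<in> A" and q: "q \<in> Qm" for b q
      proof -
        have bQm: "b \<in> Qm" using b AQm by blast
        have r1: "repr sc Qm (\<nu> \<circ> (\<lambda>y. lie_br y b))" using repr_comp[OF r repr_adr[OF bQm]] .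
        have "\<forall>a\<in>A. (\<nu> \<circ> (\<lambda>y. lie_br y b)) a = 0"
        proof
          fix a assume a: "a \<in> A"
          have "lie_br a b \<in> ?L1" unfolding L1def using a b by (intro span_base) blast
          then show "(\<nu> \<circ> (\<lambda>y. lie_br y b)) a = 0" using k1 by simp
        qed
        then show ?thesis using repr_transfer[OF r1 _ q] by simp
      qed
      have s2: "\<nu> (lie_br q1 q2) = 0" if q1: "q1 \<in> Q" and q2: "q2 \<in> Qm" for q1 q2
      proof -
        have q1Qm: "q1 \<in> Qm" using q1 QQm by blast
        have r2: "repr sc Qm (\<nu> \<circ> lie_br q1)" using repr_comp[OF r repr_ad[OF q1Qm]] .
        have "\<forall>a\<in>A. (\<nu> \<circ> lie_br q1) a = 0" using s1 q1Qm by simp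
        then show ?thesis using repr_transfer[OF r2 _ q2] by simp
      qed
      have sub: "subspace {v. \<nu> v = 0}"
        unfolding subspace_def using repr_lin[OF r] by simp
      have "?CQ \<subseteq> {v. \<nu> v = 0}" using s2 QQm by blast
      then have "?L2 \<subseteq> {v. \<nu> v = 0}" unfolding L2def using sub by (rule span_minimal)
      then have "\<nu> y = 0" using y by blast
      then have "lie_br x (\<mu> y) = 0" by (simp add: \<nu>_def)
      then show "lie_br (\<mu> y) x = 0" by (simp add: lie_br_anti[of "\<mu> y"])
    qed
    then show "\<mu> y \<in> lie_center ?L2" using closed y by (auto simp: lie_center_def)
  qed
  show ?thesis using P1 P2 P3 by blast
qed


end
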